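(* Let $\Gamma=([n],E)$ be a connected simple graph and let $M\subseteq[n]$ be a subset of maximal cardinality such that the induced subgraph $\Gamma|_M$ is isomorphic to the path $L_{|M|}$. Then for every integer $k\ge|M|$ the polytopes $Q_{\Gamma,k}$ and $Q_{\Gamma,|M|-1}$ are normally equivalent, i.e. their normal fans coincide.
   Context: $L_r$ is the path graph on $r$ vertices. For $S\subseteq[n]$ nonempty, $\Delta_S=\mathrm{conv}\{e_s:s\in S\}\subset\mathbb{R}^n$, $e_s$ the standard basis vectors. For an integer $m\ge0$, the $m$-graph polytope is the Minkowski sum $Q_{\Gamma,m}=\sum_{S}\Delta_S$ over all nonempty $S\subseteq[n]$ with $|S|\le m+1$ and $\Gamma|_S$ connected. *)

theory Defs
  imports "HOL-Analysis.Analysis"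
begin

text \<open>Vertex set [n] is modelled by a finite type 'n; the ambient space R^n by real^'n.
  A simple graph is a symmetric irreflexive relation E on 'n.\<close>

definition simple_graph :: "('n \<Rightarrow> 'n \<Rightarrow> bool) \<Rightarrow> bool" where
  "simple_graph E \<longleftrightarrow> (\<forall>x y. E x y \<longrightarrow> E y x) \<and> (\<forall>x. \<not> E x x)"

definition graph_connected :: "('n \<Rightarrow> 'n \<Rightarrow> bool) \<Rightarrow> bool" where
  "graph_connected E \<longleftrightarrow> (\<forall>x y. E\<^sup>*\<^sup>* x y)"

definition induced_connected :: "('n \<Rightarrow> 'n \<Rightarrow> bool) \<Rightarrow> 'n set \<Rightarrow> bool" where
  "induced_connected E S \<longleftrightarrow>
     (\<forall>x\<in>S. \<forall>y\<in>S. (\<lambda>a b. E a b \<and> a \<in> S \<and> b \<in> S)\<^sup>*\<^sup>* x y)"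

definition induced_path :: "('n \<Rightarrow> 'n \<Rightarrow> bool) \<Rightarrow> 'n set \<Rightarrow> bool" where
  "induced_path E M \<longleftrightarrow>
     (\<exists>f. bij_betw f {0..<card M} M \<and>
          (\<forall>i<card M. \<forall>j<card M. E (f i) (f j) \<longleftrightarrow> (Suc i = j \<or> Suc j = i)))"

definition simplex_of :: "'n set \<Rightarrow> (real^'n) set" where
  "simplex_of S = convex hull ((\<lambda>s. axis s 1) ` S)"

definition minkowski_sum :: "'a set \<Rightarrow> ('a \<Rightarrow> (real^'n) set) \<Rightarrow> (real^'n) set" where
  "minkowski_sum F P = {x. \<exists>p. (\<forall>S\<in>F. p S \<in> P S) \<and> x = (\<Sum>S\<in>F. p S)}"

definition graph_polytope :: "('n::finite \<Rightarrow> 'n \<Rightarrow> bool) \<Rightarrow> nat \<Rightarrow> (real^'n) set" where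
  "graph_polytope E m =
     minkowski_sum {S. S \<noteq> {} \<and> card S \<le> m + 1 \<and> induced_connected E S} simplex_of"

definition normal_cone :: "(real^'n) set \<Rightarrow> (real^'n) set \<Rightarrow> (real^'n) set" where
  "normal_cone P F = {u. \<forall>x\<in>F. \<forall>y\<in>P. u \<bullet> y \<le> u \<bullet> x}"

definition normal_fan :: "(real^'n) set \<Rightarrow> (real^'n) set set" where
  "normal_fan P = {normal_cone P F | F. F face_of P \<and> F \<noteq> {}}"

end

theory Submission
  imports Defs
begin


definition Amax :: "'n set \<Rightarrow> real^'n \<Rightarrow> 'n set" where
  "Amax T u = {s\<in>T. \<forall>t\<in>T. u$t \<le> u$s}"
definition mx :: "'n set \<Rightarrow> real^'n \<Rightarrow> real" where
  "mx T u = Max ((\<lambda>s. u$s) ` T)"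
definition Fp :: "(real^'n) set \<Rightarrow> real^'n \<Rightarrow> (real^'n) set" where
  "Fp P u = {x\<in>P. \<forall>y\<in>P. u \<bullet> y \<le> u \<bullet> x}"

lemma inner_e[simp]: "u \<bullet> axis s (1::real) = u $ s"
  by (simp add: inner_axis)

lemma mx_ge: "finite T \<Longrightarrow> t \<in> T \<Longrightarrow> u$t \<le> mx T u"
  unfolding mx_def by (rule Max_ge) auto

lemma Amax_mx: "finite T \<Longrightarrow> T \<noteq> {} \<Longrightarrow> s \<in> Amax T u \<longleftrightarrow> s \<in> T \<and> u$s = mx T u"
proof -
  assume f: "finite T" and ne: "T \<noteq> {}"
  have "mx T u \<in> (\<lambda>s. u$s) ` T" unfolding mx_def using f ne by (intro Max_in) auto
  then obtain s0 where s0: "s0 \<in> T" "mx T u = u$s0" by auto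
  show ?thesis unfolding Amax_def using mx_ge[OF f, of _ u] s0
    by (auto intro: antisym)
qed

lemma Amax_ne: "finite T \<Longrightarrow> T \<noteq> {} \<Longrightarrow> Amax T u \<noteq> {}"
proof -
  assume f: "finite T" and ne: "T \<noteq> {}"
  have "mx T u \<in> (\<lambda>s. u$s) ` T" unfolding mx_def using f ne by (intro Max_in) auto
  then obtain s0 where s0: "s0 \<in> T" "mx T u = u$s0" by auto
  then show ?thesis using Amax_mx[OF f ne] by auto
qed

lemma simplex_le: "finite T \<Longrightarrow> y \<in> simplex_of T \<Longrightarrow> u \<bullet> y \<le> mx T u"
proof -
  assume f: "finite T" and y: "y \<in> simplex_of T"
  have "simplex_of T \<subseteq> {y. u \<bullet> y \<le> mx T u}"
    unfolding simplex_of_def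
    by (rule hull_minimal) (auto simp: convex_halfspace_le mx_ge[OF f])
  then show ?thesis using y by auto
qed

lemma e_in_simplex: "s \<in> T \<Longrightarrow> axis s 1 \<in> simplex_of T"
  unfolding simplex_of_def by (rule hull_inc) auto

lemma simplex_eq:
  assumes f: "finite T" and ne: "T \<noteq> {}" and y: "y \<in> simplex_of T"
    and uy: "u \<bullet> y = mx T u" and sub: "Amax T u \<subseteq> Amax T v"
  shows "v \<bullet> y = mx T v"
proof -
  let ?Fc = "simplex_of T \<inter> {y. u \<bullet> y = mx T u}"
  have cvx: "convex (convex hull ((\<lambda>s. axis s (1::real)) ` T))" by (rule convex_convex_hull)
  have fc: "?Fc face_of convex hull ((\<lambda>s. axis s 1) ` T)"
    unfolding simplex_of_def
    by (rule face_of_Int_supporting_hyperplane_le[OF cvx]) (rule simplex_le[OF f, unfolded simplex_of_def])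
  have cpt: "compact ((\<lambda>s. axis s (1::real)) ` T)" using f by (intro finite_imp_compact) simp
  obtain S' where S': "S' \<subseteq> (\<lambda>s. axis s 1) ` T" "?Fc = convex hull S'"
    using face_of_convex_hull_subset[OF cpt fc] by blast
  have "S' \<subseteq> {y. v \<bullet> y = mx T v}"
  proof
    fix z assume z: "z \<in> S'"
    then obtain s where s: "s \<in> T" "z = axis s 1" using S' by auto
    have "z \<in> ?Fc" using S'(2) z by (simp add: hull_inc)
    then have "u$s = mx T u" using s by simp
    then have "s \<in> Amax T v" using sub Amax_mx[OF f ne] s by auto
    then show "z \<in> {y. v \<bullet> y = mx T v}" using Amax_mx[OF f ne] s by simp
  qed
  then have "convex hull S' \<subseteq> {y. v \<bullet> y = mx T v}"
    by (intro hull_minimal) (auto simp: convex_hyperplane)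
  moreover have "y \<in> ?Fc" using y uy by auto
  ultimately show ?thesis using S'(2) by auto
qed

lemma msum_le:
  assumes fin: "\<forall>T\<in>FF. finite T" and x: "x \<in> minkowski_sum FF simplex_of"
  shows "u \<bullet> x \<le> (\<Sum>T\<in>FF. mx T u)"
proof -
  obtain p where p: "\<forall>S\<in>FF. p S \<in> simplex_of S" "x = (\<Sum>S\<in>FF. p S)"
    using x unfolding minkowski_sum_def by auto
  have "u \<bullet> x = (\<Sum>S\<in>FF. u \<bullet> p S)" using p(2) by (simp add: inner_sum_right)
  also have "\<dots> \<le> (\<Sum>T\<in>FF. mx T u)"
    using p(1) fin by (intro sum_mono simplex_le) auto
  finally show ?thesis .
qed

lemma msum_pt:
  assumes "\<forall>T\<in>FF. g T \<in> T"
  shows "(\<Sum>T\<in>FF. axis (g T) 1) \<in> minkowski_sum FF simplex_of"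
  unfolding minkowski_sum_def
proof (intro CollectI exI conjI)
  show "\<forall>S\<in>FF. axis (g S) 1 \<in> simplex_of S" using assms by (auto intro: e_in_simplex)
qed (rule refl)

lemma msum_pt_inner: "u \<bullet> (\<Sum>T\<in>FF. axis (g T) (1::real)) = (\<Sum>T\<in>FF. u $ g T)"
  by (simp add: inner_sum_right)

lemma msum_attain:
  assumes fin: "\<forall>T\<in>FF. finite T \<and> T \<noteq> {}"
  shows "\<exists>z\<in>minkowski_sum FF simplex_of. u \<bullet> z = (\<Sum>T\<in>FF. mx T u)"
proof -
  define g where "g T = (SOME s. s \<in> Amax T u)" for T
  have g: "g T \<in> Amax T u" if "T \<in> FF" for T
    unfolding g_def using Amax_ne[of T u] fin that by (metis some_in_eq)
  have gT: "\<forall>T\<in>FF. g T \<in> T" using g Amax_def by auto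
  show ?thesis
    apply (rule bexI[OF _ msum_pt[OF gT]])
    unfolding msum_pt_inner
  proof (intro sum.cong refl)
    fix T assume T: "T \<in> FF"
    show "u $ g T = mx T u" using g[OF T] Amax_mx[of T] fin T by auto
  qed
qed

lemma Fp_char:
  assumes fin: "\<forall>T\<in>FF. finite T \<and> T \<noteq> {}"
  shows "x \<in> Fp (minkowski_sum FF simplex_of) u \<longleftrightarrow>
         x \<in> minkowski_sum FF simplex_of \<and> u \<bullet> x = (\<Sum>T\<in>FF. mx T u)"
proof -
  obtain z where z: "z \<in> minkowski_sum FF simplex_of" "u \<bullet> z = (\<Sum>T\<in>FF. mx T u)"
    using msum_attain[OF fin] by blast
  have le: "\<And>y. y \<in> minkowski_sum FF simplex_of \<Longrightarrow> u \<bullet> y \<le> (\<Sum>T\<in>FF. mx T u)"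
    using msum_le fin by blast
  have "(\<forall>y\<in>minkowski_sum FF simplex_of. u \<bullet> y \<le> u \<bullet> x) \<longleftrightarrow> u \<bullet> x = (\<Sum>T\<in>FF. mx T u)"
    if xP: "x \<in> minkowski_sum FF simplex_of"
  proof
    assume "\<forall>y\<in>minkowski_sum FF simplex_of. u \<bullet> y \<le> u \<bullet> x"
    then have "u \<bullet> z \<le> u \<bullet> x" using z(1) by blast
    then show "u \<bullet> x = (\<Sum>T\<in>FF. mx T u)" using le[OF xP] z(2) by linarith
  qed (use le in auto)
  then show ?thesis unfolding Fp_def by blast
qed

lemma sum_eq_each:
  fixes a b :: "'a \<Rightarrow> real"
  assumes "finite I" "\<And>i. i \<in> I \<Longrightarrow> a i \<le> b i" "sum a I = sum b I" "i \<in> I"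
  shows "a i = b i"
  using sum_mono_inv[of a I b i] assms by auto

lemma Fp_sub:
  assumes finF: "finite FF" and fin: "\<forall>T\<in>FF. finite T \<and> T \<noteq> {}"
  shows "Fp (minkowski_sum FF simplex_of) u \<subseteq> Fp (minkowski_sum FF simplex_of) v \<longleftrightarrow>
         (\<forall>T\<in>FF. Amax T u \<subseteq> Amax T v)"
proof
  assume R: "\<forall>T\<in>FF. Amax T u \<subseteq> Amax T v"
  show "Fp (minkowski_sum FF simplex_of) u \<subseteq> Fp (minkowski_sum FF simplex_of) v"
  proof
    fix x assume x: "x \<in> Fp (minkowski_sum FF simplex_of) u"
    then have xP: "x \<in> minkowski_sum FF simplex_of" and ux: "u \<bullet> x = (\<Sum>T\<in>FF. mx T u)"
      using Fp_char[OF fin] by auto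
    obtain p where p: "\<forall>S\<in>FF. p S \<in> simplex_of S" "x = (\<Sum>S\<in>FF. p S)"
      using xP unfolding minkowski_sum_def by auto
    have "(\<Sum>S\<in>FF. u \<bullet> p S) = (\<Sum>T\<in>FF. mx T u)" using p(2) ux by (simp add: inner_sum_right)
    then have each: "u \<bullet> p S = mx S u" if "S \<in> FF" for S
      using sum_eq_each[OF finF, of "\<lambda>S. u \<bullet> p S" "\<lambda>S. mx S u" S] simplex_le p(1) fin that by auto
    have "v \<bullet> x = (\<Sum>S\<in>FF. v \<bullet> p S)" using p(2) by (simp add: inner_sum_right)
    also have "\<dots> = (\<Sum>T\<in>FF. mx T v)"
    proof (intro sum.cong refl)
      fix T assume T: "T \<in> FF"
      show "v \<bullet> p T = mx T v" using each[OF T] simplex_eq[of T "p T" u v] p(1) fin R T by auto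
    qed
    finally show "x \<in> Fp (minkowski_sum FF simplex_of) v" using Fp_char[OF fin] xP by auto
  qed
next
  assume H: "Fp (minkowski_sum FF simplex_of) u \<subseteq> Fp (minkowski_sum FF simplex_of) v"
  show "\<forall>T\<in>FF. Amax T u \<subseteq> Amax T v"
  proof (intro ballI subsetI)
    fix T0 s assume T0: "T0 \<in> FF" and s: "s \<in> Amax T0 u"
    define g where "g T = (if T = T0 then s else SOME s. s \<in> Amax T u)" for T
    have g: "g T \<in> Amax T u" if "T \<in> FF" for T
      unfolding g_def using Amax_ne[of T u] fin that s by (auto simp: some_in_eq)
    have gT: "\<forall>T\<in>FF. g T \<in> T" using g Amax_def by auto
    let ?x = "\<Sum>T\<in>FF. axis (g T) (1::real)"
    have "u \<bullet> ?x = (\<Sum>T\<in>FF. mx T u)"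
      unfolding msum_pt_inner
    proof (intro sum.cong refl)
      fix T assume T: "T \<in> FF"
      show "u $ g T = mx T u" using g[OF T] Amax_mx[of T] fin T by auto
    qed
    then have "?x \<in> Fp (minkowski_sum FF simplex_of) u" using Fp_char[OF fin] msum_pt[OF gT] by auto
    then have "?x \<in> Fp (minkowski_sum FF simplex_of) v" using H by auto
    then have "(\<Sum>T\<in>FF. v $ g T) = (\<Sum>T\<in>FF. mx T v)" using Fp_char[OF fin] msum_pt_inner by metis
    moreover have "\<And>i. i \<in> FF \<Longrightarrow> v $ g i \<le> mx i v" using mx_ge fin gT by blast
    ultimately have "v $ g T0 = mx T0 v"
      using sum_eq_each[OF finF, of "\<lambda>T. v $ g T" "\<lambda>T. mx T v" T0] T0 by blast
    moreover have "s \<in> T0" using s Amax_def by auto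
    moreover have "finite T0" "T0 \<noteq> {}" using fin T0 by auto
    ultimately show "s \<in> Amax T0 v" using Amax_mx[of T0 s v] g_def by simp
  qed
qed



lemma msum_empty: "minkowski_sum {} P = {0}"
  unfolding minkowski_sum_def by auto

lemma msum_insert:
  assumes "a \<notin> F" "finite F"
  shows "minkowski_sum (insert a F) P = P a + minkowski_sum F P"
proof
  show "minkowski_sum (insert a F) P \<subseteq> P a + minkowski_sum F P"
  proof
    fix x assume "x \<in> minkowski_sum (insert a F) P"
    then obtain p where p: "\<forall>S\<in>insert a F. p S \<in> P S" "x = (\<Sum>S\<in>insert a F. p S)"
      unfolding minkowski_sum_def by auto
    have "x = p a + (\<Sum>S\<in>F. p S)" using p(2) assms by simp
    moreover have "(\<Sum>S\<in>F. p S) \<in> minkowski_sum F P" unfolding minkowski_sum_def using p(1) by auto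
    ultimately show "x \<in> P a + minkowski_sum F P" using p(1) by (auto intro: set_plus_intro)
  qed
next
  show "P a + minkowski_sum F P \<subseteq> minkowski_sum (insert a F) P"
  proof
    fix x assume "x \<in> P a + minkowski_sum F P"
    then obtain y z where yz: "x = y + z" "y \<in> P a" "z \<in> minkowski_sum F P" by (rule set_plus_elim)
    then obtain q where q: "\<forall>S\<in>F. q S \<in> P S" "z = (\<Sum>S\<in>F. q S)"
      unfolding minkowski_sum_def by auto
    define p where "p = q(a := y)"
    have s: "(\<Sum>S\<in>F. p S) = (\<Sum>S\<in>F. q S)" unfolding p_def using assms by (intro sum.cong) auto
    have "x = (\<Sum>S\<in>insert a F. p S)" using s yz q assms by (simp add: p_def)
    moreover have "\<forall>S\<in>insert a F. p S \<in> P S" using q yz assms by (auto simp: p_def)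
    ultimately show "x \<in> minkowski_sum (insert a F) P" unfolding minkowski_sum_def by blast
  qed
qed

lemma msum_hull:
  fixes F :: "'n::finite set set"
  assumes "finite F"
  shows "\<exists>V. finite V \<and> minkowski_sum F simplex_of = convex hull V"
  using assms
proof (induction F rule: finite_induct)
  case empty
  show ?case by (rule exI[of _ "{0}"]) (simp add: msum_empty)
next
  case (insert a F)
  then obtain V where V: "finite V" "minkowski_sum F simplex_of = convex hull V" by blast
  have "minkowski_sum (insert a F) simplex_of = simplex_of a + minkowski_sum F simplex_of"
    by (rule msum_insert[OF insert(2,1)])
  also have "\<dots> = convex hull ((\<lambda>s. axis s 1) ` a) + convex hull V"
    by (simp only: V(2) simplex_of_def)
  also have "\<dots> = convex hull ((\<lambda>s. axis s 1) ` a + V)" by (simp add: convex_hull_set_plus)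
  finally show ?case using V(1) by (intro exI[of _ "(\<lambda>s. axis s 1) ` a + V"]) (auto intro: finite_set_plus)
qed

lemma Fp_face:
  assumes cvx: "convex P" and x0: "x0 \<in> Fp P u"
  shows "Fp P u face_of P"
proof -
  have eq: "Fp P u = P \<inter> {x. u \<bullet> x = u \<bullet> x0}"
    using x0 unfolding Fp_def by (auto intro: antisym)
  have "\<And>x. x \<in> P \<Longrightarrow> u \<bullet> x \<le> u \<bullet> x0" using x0 unfolding Fp_def by auto
  then show ?thesis unfolding eq by (rule face_of_Int_supporting_hyperplane_le[OF cvx])
qed

lemma fan_char:
  assumes poly: "polytope P" and ne: "\<And>u. Fp P u \<noteq> {}"
  shows "normal_fan P = range (\<lambda>u. {v. Fp P u \<subseteq> Fp P v})"
proof -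
  have nc: "normal_cone P F = {v. F \<subseteq> Fp P v}" if "F \<subseteq> P" for F
    using that unfolding normal_cone_def Fp_def by auto
  have cvx: "convex P" using poly by (rule polytope_imp_convex)
  show ?thesis
  proof
    show "normal_fan P \<subseteq> range (\<lambda>u. {v. Fp P u \<subseteq> Fp P v})"
    proof
      fix C assume "C \<in> normal_fan P"
      then obtain F where F: "C = normal_cone P F" "F face_of P" "F \<noteq> {}"
        unfolding normal_fan_def by auto
      have "F exposed_face_of P"
        using exposed_face_of_polyhedron[OF polytope_imp_polyhedron[OF poly]] F(2) by blast
      then obtain a b where ab: "P \<subseteq> {x. a \<bullet> x \<le> b}" "F = P \<inter> {x. a \<bullet> x = b}"
        unfolding exposed_face_of_def by blast
      obtain x0 where x0: "x0 \<in> F" using F(3) by blast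
      have "F = Fp P a"
      proof
        show "F \<subseteq> Fp P a" using ab unfolding Fp_def by auto
        show "Fp P a \<subseteq> F"
        proof
          fix x assume x: "x \<in> Fp P a"
          then have "a \<bullet> x0 \<le> a \<bullet> x" "x \<in> P" using x0 ab unfolding Fp_def by auto
          then show "x \<in> F" using ab x0 by fastforce
        qed
      qed
      then show "C \<in> range (\<lambda>u. {v. Fp P u \<subseteq> Fp P v})"
        using F(1) nc[of F] F(2) face_of_imp_subset by blast
    qed
  next
    show "range (\<lambda>u. {v. Fp P u \<subseteq> Fp P v}) \<subseteq> normal_fan P"
    proof
      fix C assume "C \<in> range (\<lambda>u. {v. Fp P u \<subseteq> Fp P v})"
      then obtain u where u: "C = {v. Fp P u \<subseteq> Fp P v}" by blast
      have f: "Fp P u face_of P" using ne[of u] Fp_face[OF cvx] by blast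
      have "C = normal_cone P (Fp P u)" using u nc[of "Fp P u"] unfolding Fp_def by auto
      then show "C \<in> normal_fan P" unfolding normal_fan_def using f ne[of u] by blast
    qed
  qed
qed



lemma shortcut:
  assumes f0: "f 0 = s" and fn: "f n = t" and w: "\<forall>k<n. R (f k) (f (Suc k))"
    and ij: "i < j" "j \<le> n" and e: "R (f i) (f j)"
  shows "(R ^^ (n - (j - i - 1))) s t"
proof -
  define d where "d = j - i - 1"
  define g where "g k = (if k \<le> i then f k else f (k + d))" for k
  have jd: "j = i + 1 + d" using ij unfolding d_def by simp
  have "g 0 = s" using f0 by (simp add: g_def)
  moreover have "\<not> (n - d \<le> i)" using ij jd by linarith
  then have "g (n - d) = t" using fn ij jd by (simp add: g_def)
  moreover have "\<forall>k<n - d. R (g k) (g (Suc k))"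
  proof (intro allI impI)
    fix k assume k: "k < n - d"
    consider "k < i" | "k = i" | "k > i" by linarith
    then show "R (g k) (g (Suc k))"
    proof cases
      case 1 then show ?thesis using w ij by (simp add: g_def)
    next
      case 2 then show ?thesis using e jd by (simp add: g_def)
    next
      case 3
      then have "R (f (k + d)) (f (Suc (k + d)))" using w k by simp
      then show ?thesis using 3 by (simp add: g_def)
    qed
  qed
  ultimately show ?thesis unfolding relpowp_fun_conv d_def by blast
qed

lemma sym_rtranclp:
  assumes "\<And>x y. Q x y \<Longrightarrow> Q y x" "Q\<^sup>*\<^sup>* x y"
  shows "Q\<^sup>*\<^sup>* y x"
  using assms(2)
proof (induction rule: rtranclp_induct)
  case base then show ?case by simp
next
  case (step y z) then show ?case using assms(1) by (meson converse_rtranclp_into_rtranclp)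
qed

lemma short_path:
  assumes sg: "simple_graph E" and ic: "induced_connected E S" and s: "s \<in> S" and t: "t \<in> S"
  shows "\<exists>T\<subseteq>S. s \<in> T \<and> t \<in> T \<and> induced_connected E T \<and> induced_path E T"
proof -
  define R where "R = (\<lambda>a b. E a b \<and> a \<in> S \<and> b \<in> S)"
  have symE: "\<And>x y. E x y \<Longrightarrow> E y x" and irr: "\<And>x. \<not> E x x"
    using sg unfolding simple_graph_def by auto
  have RS: "\<forall>x\<in>S. \<forall>y\<in>S. R\<^sup>*\<^sup>* x y" using ic unfolding induced_connected_def R_def .
  have Rst: "R\<^sup>*\<^sup>* s t" using RS s t by simp
  obtain n0 where "(R ^^ n0) s t" using rtranclp_imp_relpowp[OF Rst] by (elim exE)
  define n where "n = (LEAST n. (R ^^ n) s t)"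
  have Rn: "(R ^^ n) s t" unfolding n_def by (rule LeastI) fact
  have minl: "\<And>m. m < n \<Longrightarrow> \<not> (R ^^ m) s t" unfolding n_def by (rule not_less_Least)
  obtain f where f0: "f 0 = s" and fn: "f n = t" and w: "\<forall>k<n. R (f k) (f (Suc k))"
    using Rn unfolding relpowp_fun_conv by blast
  have inS: "f k \<in> S" if "k \<le> n" for k
  proof (cases "k < n")
    case True then show ?thesis using w unfolding R_def by blast
  next
    case False then show ?thesis using that fn t by simp
  qed
  have noE: "\<not> E (f i) (f j)" if "Suc i < j" "j \<le> n" for i j
  proof
    assume "E (f i) (f j)"
    then have "R (f i) (f j)" using inS that unfolding R_def by auto
    then have "(R ^^ (n - (j - i - 1))) s t" using shortcut[OF f0 fn w, of i j] that by auto
    moreover have "n - (j - i - 1) < n" using that by auto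
    ultimately show False using minl by blast
  qed
  have inj: "inj_on f {0..n}"
  proof (rule inj_onI)
    have *: "i = j" if "f i = f j" "i < j" "j \<le> n" for i j
    proof (cases "j = n")
      case True
      have "(R ^^ i) s t" unfolding relpowp_fun_conv using f0 fn w that True
        by (intro exI[of _ f]) auto
      then show ?thesis using minl that True by blast
    next
      case False
      then have "R (f i) (f (Suc j))" using w that by auto
      then have "E (f i) (f (Suc j))" unfolding R_def by simp
      then show ?thesis using noE[of i "Suc j"] that False by auto
    qed
    fix i j assume "i \<in> {0..n}" "j \<in> {0..n}" "f i = f j"
    then show "i = j" using *[of i j] *[of j i] by (cases "i < j"; cases "j < i") auto
  qed
  define T where "T = f ` {0..n}"
  have cardT: "card T = Suc n" unfolding T_def using card_image[OF inj] by simp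
  have TS: "T \<subseteq> S" unfolding T_def using inS by auto
  have sT: "s \<in> T" and tT: "t \<in> T" unfolding T_def using f0 fn by force+
  have ip: "induced_path E T"
    unfolding induced_path_def
  proof (intro exI conjI allI impI)
    have "{0..<card T} = {0..n}" using cardT by auto
    then show "bij_betw f {0..<card T} T" by (simp add: T_def bij_betw_def inj)
    fix i j assume i: "i < card T" and j: "j < card T"
    then have i': "i \<le> n" and j': "j \<le> n" using cardT by auto
    show "E (f i) (f j) \<longleftrightarrow> (Suc i = j \<or> Suc j = i)"
    proof
      assume e: "E (f i) (f j)"
      show "Suc i = j \<or> Suc j = i"
      proof (rule ccontr)
        assume "\<not> (Suc i = j \<or> Suc j = i)"
        then consider "i = j" | "Suc i < j" | "Suc j < i" by linarith
        then show False
        proof cases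
          case 1 then show ?thesis using e irr by simp
        next
          case 2 then show ?thesis using e noE j' by blast
        next
          case 3 then show ?thesis using symE[OF e] noE i' by blast
        qed
      qed
    next
      assume "Suc i = j \<or> Suc j = i"
      then show "E (f i) (f j)"
      proof
        assume "Suc i = j" then show ?thesis using w j' unfolding R_def by auto
      next
        assume "Suc j = i" then have "E (f j) (f i)" using w i' unfolding R_def by auto
        then show ?thesis by (rule symE)
      qed
    qed
  qed
  define Q where "Q = (\<lambda>a b. E a b \<and> a \<in> T \<and> b \<in> T)"
  have Qsym: "\<And>x y. Q x y \<Longrightarrow> Q y x" unfolding Q_def using symE by blast
  have fwd: "\<forall>a\<le>b. Q\<^sup>*\<^sup>* (f a) (f b)" if "b \<le> n" for b
    using that
  proof (induction b)
    case 0 then show ?case by simp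
  next
    case (Suc b)
    have "Q (f b) (f (Suc b))" using w Suc.prems unfolding Q_def R_def T_def by auto
    then show ?case using Suc by (metis le_SucE rtranclp.rtrancl_into_rtrancl Suc_leD rtranclp.rtrancl_refl)
  qed
  have ic2: "induced_connected E T"
    unfolding induced_connected_def
  proof (intro ballI)
    fix x y assume "x \<in> T" "y \<in> T"
    then obtain a b where ab: "a \<le> n" "b \<le> n" "x = f a" "y = f b" unfolding T_def by auto
    show "(\<lambda>a b. E a b \<and> a \<in> T \<and> b \<in> T)\<^sup>*\<^sup>* x y"
    proof (cases "a \<le> b")
      case True then show ?thesis using fwd[of b] ab unfolding Q_def by auto
    next
      case False
      then have "Q\<^sup>*\<^sup>* y x" using fwd[of a] ab by auto
      then have "Q\<^sup>*\<^sup>* x y" using sym_rtranclp[of Q y x, OF Qsym] by simp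
      then show ?thesis unfolding Q_def .
    qed
  qed
  show ?thesis using TS sT tT ic2 ip by blast
qed



lemma msum_props:
  fixes FF :: "'n::finite set set"
  assumes ne: "\<forall>T\<in>FF. T \<noteq> {}"
  shows "polytope (minkowski_sum FF simplex_of)" "\<And>u. Fp (minkowski_sum FF simplex_of) u \<noteq> {}"
proof -
  have finF: "finite FF" by simp
  have fin: "\<forall>T\<in>FF. finite T \<and> T \<noteq> {}" using ne by simp
  obtain V where "finite V" "minkowski_sum FF simplex_of = convex hull V" using msum_hull[OF finF] by blast
  then show "polytope (minkowski_sum FF simplex_of)" by (simp add: polytope_convex_hull)
  fix u
  show "Fp (minkowski_sum FF simplex_of) u \<noteq> {}"
    using msum_attain[OF fin, of u] Fp_char[OF fin] by blast
qed

theorem mainTheorem5: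
  fixes E :: "'n::finite \<Rightarrow> 'n \<Rightarrow> bool" and M :: "'n set" and k :: nat
  assumes "simple_graph E"
    and "graph_connected E"
    and "induced_path E M"
    and "\<forall>M'. induced_path E M' \<longrightarrow> card M' \<le> card M"
    and "k \<ge> card M"
  shows "normal_fan (graph_polytope E k) = normal_fan (graph_polytope E (card M - 1))"
proof -
  note sg = assms(1) and maxM = assms(4) and kM = assms(5)
  have irr: "\<And>x. \<not> E x x" using sg unfolding simple_graph_def by auto
  obtain x0 :: 'n where True by simp
  have "induced_path E {x0}" unfolding induced_path_def
    by (rule exI[of _ "\<lambda>_. x0"]) (auto simp: bij_betw_def irr)
  then have M1: "card M \<ge> 1" using maxM by fastforce
  define Fk where "Fk = {S. S \<noteq> {} \<and> card S \<le> k + 1 \<and> induced_connected E S}"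
  define Fm where "Fm = {S. S \<noteq> {} \<and> card S \<le> (card M - 1) + 1 \<and> induced_connected E S}"
  have Pk: "graph_polytope E k = minkowski_sum Fk simplex_of" unfolding graph_polytope_def Fk_def ..
  have Pm: "graph_polytope E (card M - 1) = minkowski_sum Fm simplex_of" unfolding graph_polytope_def Fm_def ..
  have neK: "\<forall>T\<in>Fk. T \<noteq> {}" and neM: "\<forall>T\<in>Fm. T \<noteq> {}" unfolding Fk_def Fm_def by auto
  have finK: "\<forall>T\<in>Fk. finite T \<and> T \<noteq> {}" and finM: "\<forall>T\<in>Fm. finite T \<and> T \<noteq> {}"
    using neK neM by auto
  have sub: "Fm \<subseteq> Fk" unfolding Fm_def Fk_def using M1 kM by auto
  have key: "(\<forall>T\<in>Fk. Amax T u \<subseteq> Amax T v) \<longleftrightarrow> (\<forall>T\<in>Fm. Amax T u \<subseteq> Amax T v)" for u v :: "real^'n"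
  proof
    assume "\<forall>T\<in>Fk. Amax T u \<subseteq> Amax T v" then show "\<forall>T\<in>Fm. Amax T u \<subseteq> Amax T v" using sub by blast
  next
    assume H: "\<forall>T\<in>Fm. Amax T u \<subseteq> Amax T v"
    show "\<forall>T\<in>Fk. Amax T u \<subseteq> Amax T v"
    proof (intro ballI subsetI)
      fix S s assume S: "S \<in> Fk" and s: "s \<in> Amax S u"
      have sS: "s \<in> S" using s unfolding Amax_def by auto
      have icS: "induced_connected E S" using S unfolding Fk_def by auto
      have "v $ t \<le> v $ s" if t: "t \<in> S" for t
      proof -
        obtain T where T: "T \<subseteq> S" "s \<in> T" "t \<in> T" "induced_connected E T" "induced_path E T"
          using short_path[OF sg icS sS t] by blast
        have "card T \<le> card M" using maxM T(5) by blast
        then have TF: "T \<in> Fm" unfolding Fm_def using T M1 by auto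
        have "s \<in> Amax T u" using s T(1,2) unfolding Amax_def by auto
        then have "s \<in> Amax T v" using H TF by blast
        then show ?thesis using T(3) unfolding Amax_def by auto
      qed
      then show "s \<in> Amax S v" using sS unfolding Amax_def by auto
    qed
  qed
  have eq: "(\<lambda>u. {v. Fp (minkowski_sum Fk simplex_of) u \<subseteq> Fp (minkowski_sum Fk simplex_of) v})
          = (\<lambda>u. {v. Fp (minkowski_sum Fm simplex_of) u \<subseteq> Fp (minkowski_sum Fm simplex_of) v})"
    using key Fp_sub[OF _ finK] Fp_sub[OF _ finM] by (intro ext) simp
  show ?thesis
    unfolding Pk Pm fan_char[OF msum_props[OF neK]] fan_char[OF msum_props[OF neM]] eq ..
qed


end
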